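(* In Ruleset C, for a superposition of $\ell$ distinct single Nim heaps with $k=\max_{1\le j\le\ell} i_j$, \[\langle \mathrm{Nim}(i_1),\ldots,\mathrm{Nim}(i_\ell)\rangle_C\equiv\begin{cases} *k & \text{if } \ell=1,\\ *(k-1) & \text{otherwise.}\end{cases}\]
   Context: Single-heap Nim: $\mathrm{Nim}(x)$ is a heap of $x$ tokens; classical move $(1,-j)$, $j\ge1$, removes $j$ tokens and is illegal if fewer than $j$ tokens remain. Quantum variation: a position is a nonempty finite set $\langle G_1,\ldots,G_n\rangle$ of distinct classical positions; a classical move is legal if legal in some $G_i$; a Q-move is a nonempty set of legal classical moves, leading to the superposition (set) of all legal results of applying one of its moves to one of the $G_i$. Ruleset C (subscript $C$): Q-moves of at least two distinct classical moves are allowed; an unsuperposed (single) move is allowed if and only if it is legal in every $G_i$ of the superposition. The player with no allowed Q-move loses. $\equiv$ is game equivalence, $*k$ the value of a classical Nim heap of $k$ tokens. *)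

theory Defs
  imports Main
begin

text \<open>Second-player-win (P-) positions, as least fixed point: a position is a
  P-position if every move leads to a position from which some move reaches
  a P-position.  For terminating games this is the usual notion.\<close>
inductive plose :: "('a \<Rightarrow> 'a set) \<Rightarrow> 'a \<Rightarrow> bool" for mv where
  "(\<forall>y\<in>mv x. \<exists>z\<in>mv y. plose mv z) \<Longrightarrow> plose mv x"

definition gsum :: "('a \<Rightarrow> 'a set) \<Rightarrow> ('b \<Rightarrow> 'b set) \<Rightarrow> 'a \<times> 'b \<Rightarrow> ('a \<times> 'b) set" where
  "gsum mv1 mv2 p = (\<lambda>x'. (x', snd p)) ` mv1 (fst p) \<union> (\<lambda>y'. (fst p, y')) ` mv2 (snd p)"

definition game_equiv :: "('a \<Rightarrow> 'a set) \<Rightarrow> 'a \<Rightarrow> ('b \<Rightarrow> 'b set) \<Rightarrow> 'b \<Rightarrow> bool" where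
  "game_equiv mv1 x mv2 y \<longleftrightarrow> plose (gsum mv1 mv2) (x, y)"

text \<open>Classical Nim heap: the value *k is the position k with moves to any smaller heap.\<close>
definition nim_moves :: "nat \<Rightarrow> nat set" where
  "nim_moves k = {..<k}"

text \<open>A position is a nonempty finite set
  of heap sizes (distinct classical positions).  A Q-move is a nonempty set M of
  classical moves j (removing j \<ge> 1 tokens), each legal in some heap; it is allowed
  if it contains at least two distinct moves, or if it is a single move legal in
  every heap.\<close>
definition qmove_result :: "nat set \<Rightarrow> nat set \<Rightarrow> nat set" where
  "qmove_result S M = {g - j | g j. g \<in> S \<and> j \<in> M \<and> 1 \<le> j \<and> j \<le> g}"

definition qmovesC :: "nat set \<Rightarrow> nat set set" where
  "qmovesC S = {qmove_result S M | M.
      M \<noteq> {} \<and> (\<forall>j\<in>M. 1 \<le> j \<and> (\<exists>g\<in>S. j \<le> g)) \<and>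
      (2 \<le> card M \<or> (\<exists>j. M = {j} \<and> (\<forall>g\<in>S. j \<le> g)))}"

end

theory Submission
  imports Defs
begin

definition gv :: "nat set \<Rightarrow> nat" where
  "gv S = (if card S = 1 then Max S else Max S - 1)"

lemma res_sub:
  assumes "finite S" "T = qmove_result S M"
  shows "finite T"
proof -
  have "T \<subseteq> {..Max S}"
  proof
    fix t assume "t \<in> T"
    then obtain g j where "t = g - j" "g \<in> S" using assms(2) by (auto simp: qmove_result_def)
    moreover have "g \<le> Max S" using `g \<in> S` assms(1) by simp
    ultimately show "t \<in> {..Max S}" by simp
  qed
  then show "finite T" using finite_subset by blast
qed

lemma mv_props:
  assumes "finite S" "S \<noteq> {}" "T \<in> qmovesC S"
  shows "finite T" "T \<noteq> {}" "\<forall>t\<in>T. t < Max S"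
proof -
  obtain M where M: "T = qmove_result S M" "M \<noteq> {}" "\<forall>j\<in>M. 1 \<le> j \<and> (\<exists>g\<in>S. j \<le> g)"
    using assms(3) unfolding qmovesC_def by blast
  show "finite T" using res_sub(1)[OF assms(1) M(1)] .
  show "\<forall>t\<in>T. t < Max S"
  proof
    fix t assume "t \<in> T"
    then obtain g j where "t = g - j" "g \<in> S" "1 \<le> j" "j \<le> g"
      using M(1) by (auto simp: qmove_result_def)
    moreover have "g \<le> Max S" using `g \<in> S` assms(1) by simp
    ultimately show "t < Max S" by linarith
  qed
  obtain j where "j \<in> M" using M(2) by blast
  then obtain g where "g \<in> S" "1 \<le> j" "j \<le> g" using M(3) by blast
  then have "g - j \<in> T" using M(1) `j \<in> M` by (auto simp: qmove_result_def)
  then show "T \<noteq> {}" by blast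
qed

lemma card2_ex:
  assumes "2 \<le> card M"
  shows "\<exists>a b. a \<in> M \<and> b \<in> M \<and> a \<noteq> b"
proof (rule ccontr)
  assume "\<not> ?thesis"
  then have "\<forall>a\<in>M. \<forall>b\<in>M. a = b" by blast
  moreover have "finite M" using assms card.infinite by force
  ultimately have "card M \<le> 1" using card_le_Suc0_iff_eq by auto
  then show False using assms by simp
qed

lemma two_elems:
  assumes "finite S" "S \<noteq> {}" "T \<in> qmovesC S" "card S \<noteq> 1"
  shows "\<exists>a b. a \<in> T \<and> b \<in> T \<and> a \<noteq> b"
proof -
  let ?k = "Max S"
  have kS: "?k \<in> S" using assms by simp
  obtain M where M: "T = qmove_result S M" "M \<noteq> {}" "\<forall>j\<in>M. 1 \<le> j \<and> (\<exists>g\<in>S. j \<le> g)"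
    "2 \<le> card M \<or> (\<exists>j. M = {j} \<and> (\<forall>g\<in>S. j \<le> g))"
    using assms(3) unfolding qmovesC_def by blast
  have jk: "\<And>j. j \<in> M \<Longrightarrow> 1 \<le> j \<and> j \<le> ?k"
  proof -
    fix j assume "j \<in> M"
    then obtain g where "g \<in> S" "1 \<le> j" "j \<le> g" using M(3) by blast
    moreover have "g \<le> ?k" using `g \<in> S` assms(1) by simp
    ultimately show "1 \<le> j \<and> j \<le> ?k" by linarith
  qed
  show ?thesis
  proof (cases "2 \<le> card M")
    case True
    then obtain a b where ab: "a \<in> M" "b \<in> M" "a \<noteq> b" using card2_ex by blast
    have "?k - a \<in> T" "?k - b \<in> T" using ab jk kS M(1) by (auto simp: qmove_result_def)
    moreover have "?k - a \<noteq> ?k - b" using jk[OF ab(1)] jk[OF ab(2)] ab(3) by linarith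
    ultimately show ?thesis by blast
  next
    case False
    then obtain j where j: "M = {j}" "\<forall>g\<in>S. j \<le> g" using M(4) by blast
    have "\<exists>s\<in>S. s \<noteq> ?k"
    proof (rule ccontr)
      assume "\<not> (\<exists>s\<in>S. s \<noteq> ?k)"
      then have "S \<subseteq> {?k}" by blast
      then have "S = {?k}" using kS by blast
      then have "card S = card {?k}" by (rule arg_cong)
      then have "card S = 1" by simp
      then show False using assms(4) by simp
    qed
    then obtain s where s: "s \<in> S" "s \<noteq> ?k" by blast
    have "s \<le> ?k" using s assms(1) by simp
    have "j \<le> s" using j s by blast
    have jM: "j \<in> M" "1 \<le> j" "j \<le> ?k" using j(1) jk[of j] by auto
    have "?k - j \<in> T" unfolding M(1) qmove_result_def
      by (rule CollectI, rule exI[of _ ?k], rule exI[of _ j]) (use jM kS in blast)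
    moreover have "s - j \<in> T" unfolding M(1) qmove_result_def
      by (rule CollectI, rule exI[of _ s], rule exI[of _ j]) (use jM s `j \<le> s` in blast)
    moreover have "?k - j \<noteq> s - j" using `j \<le> s` `s \<le> ?k` s(2) by linarith
    ultimately show ?thesis by blast
  qed
qed

lemma card_ne1: "a \<in> T \<Longrightarrow> b \<in> T \<Longrightarrow> a \<noteq> b \<Longrightarrow> card T \<noteq> 1"
  by (metis card_1_singletonE singletonD)

lemma gv_le: "finite T \<Longrightarrow> T \<noteq> {} \<Longrightarrow> gv T \<le> Max T"
  by (simp add: gv_def)

lemma lemA:
  assumes "finite S" "S \<noteq> {}" "T \<in> qmovesC S"
  shows "gv T \<noteq> gv S"
proof -
  note P = mv_props[OF assms]
  have MT: "Max T < Max S" using P by simp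
  show ?thesis
  proof (cases "card S = 1")
    case True
    then show ?thesis using gv_le[OF P(1,2)] MT by (simp add: gv_def)
  next
    case False
    then obtain a b where ab: "a \<in> T" "b \<in> T" "a \<noteq> b" using two_elems[OF assms] by blast
    then have "card T \<noteq> 1" by (rule card_ne1)
    moreover have "1 \<le> Max T"
    proof -
      have "a \<le> Max T" "b \<le> Max T" using ab P(1) by simp_all
      then show ?thesis using ab(3) by linarith
    qed
    ultimately show ?thesis using False MT by (simp add: gv_def)
  qed
qed

lemma lemB:
  assumes "finite S" "S \<noteq> {}" "m < gv S"
  shows "\<exists>T\<in>qmovesC S. gv T = m"
proof -
  let ?k = "Max S"
  have kS: "?k \<in> S" using assms by simp
  show ?thesis
  proof (cases "card S = 1")
    case True
    then have S: "S = {?k}" using kS by (metis card_1_singletonE singletonD)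
    have m: "m < ?k" using assms(3) True by (simp add: gv_def)
    let ?M = "{?k - m}"
    have "qmove_result {?k} ?M = {m}"
      using m by (auto simp: qmove_result_def)
    moreover have "qmove_result {?k} ?M \<in> qmovesC {?k}"
      unfolding qmovesC_def using m by (intro CollectI exI[of _ ?M]) auto
    ultimately have "\<exists>T\<in>qmovesC {?k}. gv T = m" by (force simp: gv_def)
    then show ?thesis using S by simp
  next
    case False
    have m: "m + 1 < ?k" using assms(3) False by (simp add: gv_def)
    let ?M = "{?k - m - 1, ?k - m}"
    let ?T = "qmove_result S ?M"
    have cM: "card ?M = 2" using m by simp
    have e1: "m = ?k - (?k - m)" "m + 1 = ?k - (?k - m - 1)" using m by auto
    have T1a: "m \<in> ?T" unfolding qmove_result_def
      by (rule CollectI, rule exI[of _ ?k], rule exI[of _ "?k - m"], use m kS e1 in auto)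
    have T1b: "m + 1 \<in> ?T" unfolding qmove_result_def
      by (rule CollectI, rule exI[of _ ?k], rule exI[of _ "?k - m - 1"], use m kS e1 in auto)
    note T1 = T1a T1b
    have T2: "\<forall>t\<in>?T. t \<le> m + 1"
    proof
      fix t assume "t \<in> ?T"
      then obtain g j where "t = g - j" "g \<in> S" "j \<in> ?M"
        unfolding qmove_result_def by blast
      moreover have "g \<le> ?k" using `g \<in> S` assms(1) by simp
      ultimately show "t \<le> m + 1" using m by auto
    qed
    have fT: "finite ?T" using res_sub(1)[OF assms(1) refl] .
    have "Max ?T = m + 1" using T1 T2 fT by (intro Max_eqI) auto
    moreover have "card ?T \<noteq> 1" using T1 by (intro card_ne1[of m _ "m+1"]) auto
    ultimately have gT: "gv ?T = m" by (simp add: gv_def)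
    have inT: "?T \<in> qmovesC S"
      unfolding qmovesC_def
    proof (rule CollectI, rule exI[of _ ?M], intro conjI)
      show "\<forall>j\<in>?M. 1 \<le> j \<and> (\<exists>g\<in>S. j \<le> g)" using m kS by (auto intro!: bexI[of _ "Max S"])
    qed (use cM in auto)
    show ?thesis by (rule bexI[where x="?T" and P="\<lambda>T. gv T = m", OF gT inT])
  qed
qed

lemma main:
  "\<And>S n. finite S \<Longrightarrow> S \<noteq> {} \<Longrightarrow> gv S = n \<Longrightarrow> Max S + n = N \<Longrightarrow>
     plose (gsum qmovesC nim_moves) (S, n)"
proof (induction N rule: less_induct)
  case (less N S n)
  show ?case
  proof (rule plose.intros, rule ballI)
    fix y assume "y \<in> gsum qmovesC nim_moves (S, n)"
    then consider (L) T where "y = (T, n)" "T \<in> qmovesC S"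
      | (R) m where "y = (S, m)" "m < n"
      unfolding gsum_def nim_moves_def by auto
    then show "\<exists>z\<in>gsum qmovesC nim_moves y. plose (gsum qmovesC nim_moves) z"
    proof cases
      case L
      note P = mv_props[OF less.prems(1,2) L(2)]
      have MT: "Max T < Max S" using P by simp
      have ne: "gv T \<noteq> n" using lemA[OF less.prems(1,2) L(2)] less.prems(3) by simp
      show ?thesis
      proof (cases "gv T < n")
        case True
        have "plose (gsum qmovesC nim_moves) (T, gv T)"
          using less.IH[of "Max T + gv T" T "gv T"] P MT True less.prems(4) by simp
        moreover have "(T, gv T) \<in> gsum qmovesC nim_moves y"
          using L(1) True unfolding gsum_def nim_moves_def by auto
        ultimately show ?thesis by blast
      next
        case False
        then have "n < gv T" using ne by simp
        then obtain T' where T': "T' \<in> qmovesC T" "gv T' = n" using lemB[OF P(1,2)] by blast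
        note P' = mv_props[OF P(1,2) T'(1)]
        have "Max T' < Max T" using P' by simp
        then have "Max T' + n < N" using MT less.prems(4) by simp
        then have "plose (gsum qmovesC nim_moves) (T', n)"
          using less.IH[of "Max T' + n" T' n] P' T'(2) by simp
        moreover have "(T', n) \<in> gsum qmovesC nim_moves y"
          using L(1) T'(1) unfolding gsum_def by auto
        ultimately show ?thesis by blast
      qed
    next
      case R
      obtain T where T: "T \<in> qmovesC S" "gv T = m"
        using lemB[OF less.prems(1,2)] R(2) less.prems(3) by blast
      note P = mv_props[OF less.prems(1,2) T(1)]
      have "Max T < Max S" using P by simp
      then have "Max T + m < N" using R(2) less.prems(4) by simp
      then have "plose (gsum qmovesC nim_moves) (T, m)"
        using less.IH[of "Max T + m" T m] P T(2) by simp
      moreover have "(T, m) \<in> gsum qmovesC nim_moves y"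
        using R(1) T(1) unfolding gsum_def by auto
      ultimately show ?thesis by blast
    qed
  qed
qed

theorem lemma4:
  fixes S :: "nat set" and k :: nat
  assumes "finite S" and "S \<noteq> {}" and "k = Max S"
  shows "game_equiv qmovesC S nim_moves (if card S = 1 then k else k - 1)"
proof -
  have "plose (gsum qmovesC nim_moves) (S, gv S)" using main[OF assms(1,2) refl refl] .
  then show ?thesis unfolding game_equiv_def gv_def assms(3) .
qed

end
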